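(* Both \textsc{Greedy Min-Sum} and \textsc{Greedy Min-Max} have competitive ratio $\Omega(n)$ with respect to the \textsc{Min-Max} objective, where $n$ is the number of agents.
   Context: An instance $\mathcal{I}=(N,P,T,(\mathbf{D}_i)_{i\in N})$ has agents $N=[n]$, projects $P=\{p_1,\dots,p_m\}$, timesteps $T=[\ell]$, and disapproval sets $D_{ik}\subseteq P$. An outcome is $\mathbf{o}\in P^\ell$, $\mathbf{o}^{(k)}=(o_1,\dots,o_k)$, $d_i(\mathbf{o}^{(k)})=|\{t\in[k]:o_t\in D_{it}\}|$, $d_i(\mathbf{o})=d_i(\mathbf{o}^{(\ell)})$. An online algorithm chooses each $o_k$ based only on $(D_{it})_{i\in N,t\in[k]}$. \textsc{Greedy Min-Sum} picks at each timestep $k$ a project minimizing $|\{i:p\in D_{ik}\}|$ (ties broken lexicographically by $p_1,\dots,p_m$). \textsc{Greedy Min-Max} picks at each timestep $k$ a project $o_k$ minimizing $\max_{i\in N}d_i(\mathbf{o}^{(k)})$ given the already chosen $o_1,\dots,o_{k-1}$ (ties broken lexicographically). The competitive ratio of an online algorithm $\mathcal{B}$ with respect to \textsc{Min-Max} is $\sup_{\mathcal{I}}\frac{\max_i d_i(\mathcal{B}(\mathcal{I}))}{\min_{\mathbf{o}}\max_i d_i(\mathbf{o})}$, considered as a function of $n$. *)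

theory Defs
  imports Complex_Main "HOL-Library.Extended_Real"
begin

text \<open>Agents are 0..n-1, projects 0..m-1, timesteps 0..l-1 (0-indexed).
  A disapproval profile is D :: agent => timestep => project set, D i t being D_{i,t+1}.
  An outcome (or prefix of one) is a list of projects; os ! t is the project chosen
  at timestep t.\<close>

type_synonym profile = "nat \<Rightarrow> nat \<Rightarrow> nat set"

definition dis :: "profile \<Rightarrow> nat \<Rightarrow> nat list \<Rightarrow> nat" where
  "dis D i os = card {t. t < length os \<and> os ! t \<in> D i t}"

definition maxdis :: "nat \<Rightarrow> profile \<Rightarrow> nat list \<Rightarrow> nat" where
  "maxdis n D os = Max (insert 0 {dis D i os | i. i < n})"

definition lexargmin :: "nat \<Rightarrow> (nat \<Rightarrow> nat) \<Rightarrow> nat" where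
  "lexargmin m f = (LEAST p. p < m \<and> (\<forall>q<m. f p \<le> f q))"

definition greedy_minsum :: "nat \<Rightarrow> nat \<Rightarrow> nat \<Rightarrow> profile \<Rightarrow> nat list" where
  "greedy_minsum n m l D = map (\<lambda>k. lexargmin m (\<lambda>p. card {i. i < n \<and> p \<in> D i k})) [0..<l]"

fun greedy_minmax_prefix :: "nat \<Rightarrow> nat \<Rightarrow> profile \<Rightarrow> nat \<Rightarrow> nat list" where
  "greedy_minmax_prefix n m D 0 = []"
| "greedy_minmax_prefix n m D (Suc k) =
     (let xs = greedy_minmax_prefix n m D k
      in xs @ [lexargmin m (\<lambda>p. maxdis n D (xs @ [p]))])"

definition greedy_minmax :: "nat \<Rightarrow> nat \<Rightarrow> nat \<Rightarrow> profile \<Rightarrow> nat list" where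
  "greedy_minmax n m l D = greedy_minmax_prefix n m D l"

definition opt_minmax :: "nat \<Rightarrow> nat \<Rightarrow> nat \<Rightarrow> profile \<Rightarrow> nat" where
  "opt_minmax n m l D = Min {maxdis n D os | os. length os = l \<and> set os \<subseteq> {..<m}}"

definition instances :: "(nat \<times> nat \<times> profile) set" where
  "instances = {(m, l, D). 0 < m \<and> (\<forall>i t. D i t \<subseteq> {..<m})}"

text \<open>Ratio alg/opt, with x/0 = infinity for x > 0 and 0/0 = 0.\<close>
definition ratio :: "nat \<Rightarrow> nat \<Rightarrow> ereal" where
  "ratio a b = (if b = 0 then (if a = 0 then 0 else \<infinity>) else ereal (real a / real b))"

definition competitive_ratio ::
  "(nat \<Rightarrow> nat \<Rightarrow> nat \<Rightarrow> profile \<Rightarrow> nat list) \<Rightarrow> nat \<Rightarrow> ereal" where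
  "competitive_ratio alg n =
     (SUP (m, l, D) \<in> instances. ratio (maxdis n D (alg n m l D)) (opt_minmax n m l D))"

end

theory Submission
  imports Defs
begin

lemma dis_le_length: "dis D i os \<le> length os"
proof -
  have "{t. t < length os \<and> os ! t \<in> D i t} \<subseteq> {..<length os}" by auto
  hence "card {t. t < length os \<and> os ! t \<in> D i t} \<le> card {..<length os}"
    by (intro card_mono) auto
  thus ?thesis unfolding dis_def by simp
qed

lemma maxdis_le: assumes "\<And>i. i < n \<Longrightarrow> dis D i os \<le> b" shows "maxdis n D os \<le> b"
proof -
  have e: "{dis D i os | i. i < n} = (\<lambda>i. dis D i os) ` {..<n}" by auto
  show ?thesis unfolding maxdis_def e using assms by (subst Max_le_iff) auto
qed

lemma maxdis_ge: assumes "i < n" shows "dis D i os \<le> maxdis n D os"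
proof -
  have e: "{dis D i os | i. i < n} = (\<lambda>i. dis D i os) ` {..<n}" by auto
  show ?thesis unfolding maxdis_def e using assms by (subst Max_ge_iff) auto
qed

lemma maxdis_le_length: "maxdis n D os \<le> length os"
  by (rule maxdis_le) (rule dis_le_length)

lemma lexargmin2: assumes "f 0 \<le> f (Suc 0)" shows "lexargmin 2 f = 0"
  unfolding lexargmin_def
proof (rule Least_eq_0)
  show "0 < (2::nat) \<and> (\<forall>q<2. f 0 \<le> f q)" using assms
    by (auto simp: less_2_cases_iff)
qed

lemma opt_le: assumes "length os = l" "set os \<subseteq> {..<m}" shows "opt_minmax n m l D \<le> maxdis n D os"
proof -
  have "{maxdis n D os | os. length os = l \<and> set os \<subseteq> {..<m}} \<subseteq> (\<lambda>os. maxdis n D os) ` {os. set os \<subseteq> {..<m} \<and> length os = l}"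
    by auto
  moreover have "finite {os. set os \<subseteq> {..<m} \<and> length os = l}"
    by (rule finite_lists_length_eq) auto
  ultimately have fin: "finite {maxdis n D os | os. length os = l \<and> set os \<subseteq> {..<m}}"
    using finite_subset by blast
  show ?thesis unfolding opt_minmax_def using assms
    by (intro Min_le[OF fin]) auto
qed

lemma ratio_ge: assumes "b \<le> 1" "a \<ge> 1" shows "ereal (real a) \<le> ratio a b"
proof (cases "b = 0")
  case True then show ?thesis using assms by (simp add: ratio_def)
next
  case False then have "b = 1" using assms by simp
  then show ?thesis by (simp add: ratio_def)
qed

lemma cr_ge: assumes "(m, l, D) \<in> instances" "ereal x \<le> ratio (maxdis n D (alg n m l D)) (opt_minmax n m l D)"
  shows "ereal x \<le> competitive_ratio alg n"
proof -
  have "ratio (maxdis n D (alg n m l D)) (opt_minmax n m l D) \<le> competitive_ratio alg n"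
    unfolding competitive_ratio_def
    using SUP_upper[OF assms(1), of "\<lambda>(m, l, D). ratio (maxdis n D (alg n m l D)) (opt_minmax n m l D)"]
    by simp
  thus ?thesis using assms(2) by (rule order_trans[rotated])
qed

definition Ds :: profile where
  "Ds i t = (if i = 0 then {0} else if i = Suc t then {1} else {})"

definition Dm :: profile where
  "Dm i t = {0} \<union> (if i = t then {1} else {})"

lemma minsum_part:
  assumes n: "n \<ge> 2"
  shows "ereal (real (n - 1)) \<le> competitive_ratio greedy_minsum n"
proof (rule cr_ge[of 2 "n - 1" Ds])
  show "(2, n - 1, Ds) \<in> instances" unfolding instances_def Ds_def by auto
  have g: "greedy_minsum n 2 (n - 1) Ds = replicate (n - 1) 0"
  proof -
    have "lexargmin 2 (\<lambda>p. card {i. i < n \<and> p \<in> Ds i k}) = 0" if "k < n - 1" for k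
    proof (rule lexargmin2)
      have "{i. i < n \<and> 0 \<in> Ds i k} = {0}" using n by (auto simp: Ds_def)
      moreover have "{i. i < n \<and> Suc 0 \<in> Ds i k} = {Suc k}" using that by (auto simp: Ds_def)
      ultimately show "card {i. i < n \<and> 0 \<in> Ds i k} \<le> card {i. i < n \<and> Suc 0 \<in> Ds i k}" by simp
    qed
    thus ?thesis unfolding greedy_minsum_def by (intro nth_equalityI) auto
  qed
  have "dis Ds 0 (replicate (n - 1) 0) = n - 1"
  proof -
    have "{t. t < length (replicate (n - 1) (0::nat)) \<and> replicate (n - 1) 0 ! t \<in> Ds 0 t} = {..<n-1}"
      by (auto simp: Ds_def)
    thus ?thesis unfolding dis_def by simp
  qed
  hence a: "maxdis n Ds (greedy_minsum n 2 (n - 1) Ds) \<ge> n - 1"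
    using maxdis_ge[of 0 n Ds "replicate (n - 1) 0"] n g by simp
  have "opt_minmax n 2 (n - 1) Ds \<le> maxdis n Ds (replicate (n - 1) 1)"
    by (rule opt_le) auto
  also have "\<dots> \<le> 1"
  proof (rule maxdis_le)
    fix i
    have "{t. t < length (replicate (n - 1) (1::nat)) \<and> replicate (n - 1) 1 ! t \<in> Ds i t} \<subseteq> {i - 1}"
      by (auto simp: Ds_def split: if_splits)
    hence "card {t. t < length (replicate (n - 1) (1::nat)) \<and> replicate (n - 1) 1 ! t \<in> Ds i t} \<le> card {i - 1}"
      by (intro card_mono) auto
    thus "dis Ds i (replicate (n - 1) 1) \<le> 1" unfolding dis_def by simp
  qed
  finally have b: "opt_minmax n 2 (n - 1) Ds \<le> 1" .
  have "ereal (real (maxdis n Ds (greedy_minsum n 2 (n - 1) Ds))) \<le> ratio (maxdis n Ds (greedy_minsum n 2 (n - 1) Ds)) (opt_minmax n 2 (n - 1) Ds)"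
    using a b n by (intro ratio_ge) auto
  moreover have "ereal (real (n - 1)) \<le> ereal (real (maxdis n Ds (greedy_minsum n 2 (n - 1) Ds)))"
    using a by simp
  ultimately show "ereal (real (n - 1)) \<le> ratio (maxdis n Ds (greedy_minsum n 2 (n - 1) Ds)) (opt_minmax n 2 (n - 1) Ds)"
    by (rule order_trans[rotated])
qed

lemma minmax_prefix: "k \<le> n \<Longrightarrow> greedy_minmax_prefix n 2 Dm k = replicate k 0"
proof (induction k)
  case 0 then show ?case by simp
next
  case (Suc k)
  then have k: "k < n" by simp
  have "lexargmin 2 (\<lambda>p. maxdis n Dm (replicate k 0 @ [p])) = 0"
  proof (rule lexargmin2)
    have "maxdis n Dm (replicate k 0 @ [0]) \<le> Suc k" using maxdis_le_length[of n Dm "replicate k 0 @ [0]"] by simp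
    also have "Suc k = dis Dm k (replicate k 0 @ [Suc 0])"
    proof -
      have "{t. t < length (replicate k (0::nat) @ [Suc 0]) \<and> (replicate k 0 @ [Suc 0]) ! t \<in> Dm k t} = {..<Suc k}"
        by (auto simp: Dm_def nth_append)
      thus ?thesis unfolding dis_def by simp
    qed
    also have "\<dots> \<le> maxdis n Dm (replicate k 0 @ [Suc 0])" using k by (rule maxdis_ge)
    finally show "maxdis n Dm (replicate k 0 @ [0]) \<le> maxdis n Dm (replicate k 0 @ [Suc 0])" .
  qed
  then show ?case using Suc by (simp add: Let_def replicate_append_same)
qed

lemma minmax_part:
  assumes n: "n \<ge> 1"
  shows "ereal (real n) \<le> competitive_ratio greedy_minmax n"
proof (rule cr_ge[of 2 n Dm])
  show "(2, n, Dm) \<in> instances" unfolding instances_def Dm_def by auto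
  have g: "greedy_minmax n 2 n Dm = replicate n 0" unfolding greedy_minmax_def by (rule minmax_prefix) simp
  have "dis Dm 0 (replicate n 0) = n"
  proof -
    have "{t. t < length (replicate n (0::nat)) \<and> replicate n 0 ! t \<in> Dm 0 t} = {..<n}"
      by (auto simp: Dm_def)
    thus ?thesis unfolding dis_def by simp
  qed
  hence a: "maxdis n Dm (greedy_minmax n 2 n Dm) \<ge> n"
    using maxdis_ge[of 0 n Dm "replicate n 0"] n g by simp
  have "opt_minmax n 2 n Dm \<le> maxdis n Dm (replicate n 1)"
    by (rule opt_le) auto
  also have "\<dots> \<le> 1"
  proof (rule maxdis_le)
    fix i
    have "{t. t < length (replicate n (1::nat)) \<and> replicate n 1 ! t \<in> Dm i t} \<subseteq> {i}"
      by (auto simp: Dm_def split: if_splits)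
    hence "card {t. t < length (replicate n (1::nat)) \<and> replicate n 1 ! t \<in> Dm i t} \<le> card {i}"
      by (intro card_mono) auto
    thus "dis Dm i (replicate n 1) \<le> 1" unfolding dis_def by simp
  qed
  finally have b: "opt_minmax n 2 n Dm \<le> 1" .
  have "ereal (real (maxdis n Dm (greedy_minmax n 2 n Dm))) \<le> ratio (maxdis n Dm (greedy_minmax n 2 n Dm)) (opt_minmax n 2 n Dm)"
    using a b n by (intro ratio_ge) auto
  moreover have "ereal (real n) \<le> ereal (real (maxdis n Dm (greedy_minmax n 2 n Dm)))"
    using a by simp
  ultimately show "ereal (real n) \<le> ratio (maxdis n Dm (greedy_minmax n 2 n Dm)) (opt_minmax n 2 n Dm)"
    by (rule order_trans[rotated])
qed

theorem proposition3:
  shows "\<exists>c > 0. \<exists>N. \<forall>n \<ge> N.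
           ereal (c * real n) \<le> competitive_ratio greedy_minsum n \<and>
           ereal (c * real n) \<le> competitive_ratio greedy_minmax n"
proof (intro exI[of _ "1/2"] conjI exI[of _ 2] allI impI)
  fix n :: nat assume n: "2 \<le> n"
  have "ereal (1/2 * real n) \<le> ereal (real (n - 1))" using n by (simp add: of_nat_diff)
  thus "ereal (1/2 * real n) \<le> competitive_ratio greedy_minsum n"
    using minsum_part[OF n] by (rule order_trans)
  have "ereal (1/2 * real n) \<le> ereal (real n)" by simp
  thus "ereal (1/2 * real n) \<le> competitive_ratio greedy_minmax n"
    using minmax_part n by (meson order_trans one_le_numeral le_trans)
qed simp

end
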